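(* Let $X=\{X(t):t\in[0,1]\}$ be a second-order stochastic process with continuous trajectories and continuous mean and covariance functions, the covariance function $K$ being positive definite. Let $(\alpha_j)$ be a sequence of positive real numbers with $\alpha_j\to\alpha>0$ as $j\to\infty$. Then $\|X_{\alpha_j}\|_K\to\|X_\alpha\|_K$ almost surely as $j\to\infty$.
   Context: $\mathcal{H}(K)$ is the RKHS of $K$: the completion of the finite linear combinations $\sum_i a_iK(t_i,\cdot)$ under $\langle\sum_i a_iK(t_i,\cdot),\sum_j b_jK(s_j,\cdot)\rangle_K=\sum_{i,j}a_ib_jK(t_i,s_j)$ (elements are pointwise limits of Cauchy sequences), norm $\|\cdot\|_K$. For $x\in L^2[0,1]$ and $\beta>0$, $x_\beta=\operatorname{argmin}_{f\in\mathcal{H}(K)}\|x-f\|_2^2+\beta\|f\|_K^2$ ($\|\cdot\|_2$ the $L^2[0,1]$ norm); $X_\beta$ denotes this applied to the trajectory of $X$. *)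

theory Defs
  imports "HOL-Probability.Probability"
begin

text \<open>Finite linear combinations sum_i a_i K(t_i, .) with t_i in [0,1] are
represented as lists of pairs (a_i, t_i).\<close>

type_synonym combo = "(real \<times> real) list"

definition combo_fun :: "(real \<Rightarrow> real \<Rightarrow> real) \<Rightarrow> combo \<Rightarrow> real \<Rightarrow> real" where
  "combo_fun K c t = (\<Sum>(a, s)\<leftarrow>c. a * K s t)"

definition kinner :: "(real \<Rightarrow> real \<Rightarrow> real) \<Rightarrow> combo \<Rightarrow> combo \<Rightarrow> real" where
  "kinner K c d = (\<Sum>(a, s)\<leftarrow>c. \<Sum>(b, r)\<leftarrow>d. a * b * K s r)"

definition knorm :: "(real \<Rightarrow> real \<Rightarrow> real) \<Rightarrow> combo \<Rightarrow> real" where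
  "knorm K c = sqrt (kinner K c c)"

definition combo_diff :: "combo \<Rightarrow> combo \<Rightarrow> combo" where
  "combo_diff c d = c @ map (\<lambda>(b, r). (- b, r)) d"

definition valid_combo :: "combo \<Rightarrow> bool" where
  "valid_combo c \<longleftrightarrow> (\<forall>(a, s)\<in>set c. s \<in> {0..1})"

definition rkhs_approx :: "(real \<Rightarrow> real \<Rightarrow> real) \<Rightarrow> (nat \<Rightarrow> combo) \<Rightarrow> (real \<Rightarrow> real) \<Rightarrow> bool" where
  "rkhs_approx K c f \<longleftrightarrow>
     (\<forall>n. valid_combo (c n)) \<and>
     (\<forall>e>0. \<exists>N. \<forall>m\<ge>N. \<forall>n\<ge>N. knorm K (combo_diff (c m) (c n)) < e) \<and>
     (\<forall>t\<in>{0..1}. (\<lambda>n. combo_fun K (c n) t) \<longlonglongrightarrow> f t)"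

text \<open>The RKHS H(K): functions on [0,1] (extended by 0 outside [0,1]) that are
pointwise limits of K-Cauchy sequences of finite combinations.\<close>
definition rkhs :: "(real \<Rightarrow> real \<Rightarrow> real) \<Rightarrow> (real \<Rightarrow> real) set" where
  "rkhs K = {f. (\<forall>t. t \<notin> {0..1} \<longrightarrow> f t = 0) \<and> (\<exists>c. rkhs_approx K c f)}"

definition rkhs_norm :: "(real \<Rightarrow> real \<Rightarrow> real) \<Rightarrow> (real \<Rightarrow> real) \<Rightarrow> real" where
  "rkhs_norm K f = (THE r. \<forall>c. rkhs_approx K c f \<longrightarrow> (\<lambda>n. knorm K (c n)) \<longlonglongrightarrow> r)"

definition L2_dist_sq :: "(real \<Rightarrow> real) \<Rightarrow> (real \<Rightarrow> real) \<Rightarrow> real" where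
  "L2_dist_sq x f = (LINT t:{0..1}|lborel. (x t - f t)\<^sup>2)"

definition reg_fit :: "(real \<Rightarrow> real \<Rightarrow> real) \<Rightarrow> (real \<Rightarrow> real) \<Rightarrow> real \<Rightarrow> (real \<Rightarrow> real)" where
  "reg_fit K x \<beta> = (THE f. f \<in> rkhs K \<and>
     (\<forall>g\<in>rkhs K. L2_dist_sq x f + \<beta> * (rkhs_norm K f)\<^sup>2 \<le> L2_dist_sq x g + \<beta> * (rkhs_norm K g)\<^sup>2))"

definition pos_def_kernel :: "(real \<Rightarrow> real \<Rightarrow> real) \<Rightarrow> bool" where
  "pos_def_kernel K \<longleftrightarrow>
    (\<forall>ts a :: real list. distinct ts \<and> set ts \<subseteq> {0..1} \<and> length a = length ts \<and> (\<exists>x\<in>set a. x \<noteq> 0)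
       \<longrightarrow> (\<Sum>i<length ts. \<Sum>j<length ts. a!i * a!j * K (ts!i) (ts!j)) > 0)"

end

theory Submission
  imports Defs
begin



definition scl :: "real \<Rightarrow> combo \<Rightarrow> combo" where
  "scl r c = map (\<lambda>(a, s). (r * a, s)) c"

lemma kinner_Nil1[simp]: "kinner K [] d = 0" by (simp add: kinner_def)
lemma kinner_Nil2[simp]: "kinner K c [] = 0" by (induct c) (auto simp: kinner_def)
lemma kinner_Cons1[simp]: "kinner K ((a,s)#c) d = (\<Sum>(b, r)\<leftarrow>d. a * b * K s r) + kinner K c d"
  by (simp add: kinner_def)
lemma kinner_Cons2[simp]: "kinner K c ((b,r)#d) = (\<Sum>(a, s)\<leftarrow>c. a * b * K s r) + kinner K c d"
  by (induct c) (auto simp: kinner_def)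
lemma kinner_append1: "kinner K (c@d) e = kinner K c e + kinner K d e"
  by (simp add: kinner_def)
lemma kinner_append2: "kinner K c (d@e) = kinner K c d + kinner K c e"
  by (induct d) auto
lemma sl_scl: "(\<Sum>(b, t)\<leftarrow>scl r e. b * f t) = r * (\<Sum>(b, t)\<leftarrow>e. b * f t)"
  by (induct e) (auto simp: scl_def algebra_simps)
lemma sl_cmult: "(\<Sum>(b, t)\<leftarrow>e. (r::real) * f b t) = r * (\<Sum>(b, t)\<leftarrow>e. f b t)"
  by (induct e) (auto simp: algebra_simps)
lemma kinner_alt: "kinner K c d = (\<Sum>(a, s)\<leftarrow>c. a * (\<Sum>(b, t)\<leftarrow>d. b * K s t))"
  unfolding kinner_def by (rule arg_cong[where f=sum_list], rule map_cong, simp,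
     auto simp: sl_cmult[symmetric] algebra_simps)
lemma kinner_scl1: "kinner K (scl r c) e = r * kinner K c e"
  unfolding kinner_alt by (rule sl_scl)
lemma kinner_scl2: "kinner K c (scl r e) = r * kinner K c e"
  unfolding kinner_alt by (simp add: sl_scl sl_cmult[symmetric] algebra_simps)
lemma combo_diff_scl: "combo_diff c d = c @ scl (-1) d"
  by (simp add: combo_diff_def scl_def)
lemma combo_fun_kinner: "combo_fun K c t = kinner K c [(1, t)]"
  by (simp add: combo_fun_def kinner_def)
lemma kinner_sym:
  assumes "\<And>s t. K s t = K t s" shows "kinner K c d = kinner K d c"
proof (induct c)
  case Nil then show ?case by simp
next
  case (Cons p c)
  obtain a s where p: "p = (a, s)" by (cases p)
  have "(\<Sum>(b, r)\<leftarrow>d. a * b * K s r) = (\<Sum>(b, r)\<leftarrow>d. b * a * K r s)"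
    by (rule arg_cong[where f=sum_list], rule map_cong, auto simp: assms mult.commute)
  then show ?case using Cons by (simp add: p)
qed

lemma valid_append[simp]: "valid_combo (c @ d) \<longleftrightarrow> valid_combo c \<and> valid_combo d"
  by (auto simp: valid_combo_def)
lemma valid_scl[simp]: "valid_combo (scl r c) \<longleftrightarrow> valid_combo c"
  by (auto simp: valid_combo_def scl_def)
lemma valid_Nil[simp]: "valid_combo []" by (simp add: valid_combo_def)
lemma valid_single[simp]: "valid_combo [(a, t)] \<longleftrightarrow> t \<in> {0..1}" by (simp add: valid_combo_def)
lemma valid_diff[simp]: "valid_combo (combo_diff c d) \<longleftrightarrow> valid_combo c \<and> valid_combo d"
  by (simp add: combo_diff_scl)
lemma knorm_Nil[simp]: "knorm K [] = 0" by (simp add: knorm_def)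

locale kern =
  fixes K :: "real \<Rightarrow> real \<Rightarrow> real"
  assumes sym: "\<And>s t. K s t = K t s"
    and psd: "\<And>c. valid_combo c \<Longrightarrow> kinner K c c \<ge> 0"
    and cont: "continuous_on ({0..1} \<times> {0..1}) (\<lambda>(s, t). K s t)"
begin

lemma ksym: "kinner K c d = kinner K d c" by (rule kinner_sym[OF sym])

lemma expand: "kinner K (c @ scl l d) (c @ scl l d) = kinner K c c + 2 * l * kinner K c d + l^2 * kinner K d d"
  by (simp add: kinner_append1 kinner_append2 kinner_scl1 kinner_scl2 ksym[of d c] power2_eq_square algebra_simps)

lemma CS: assumes "valid_combo c" "valid_combo d"
  shows "(kinner K c d)^2 \<le> kinner K c c * kinner K d d"
proof -
  define A where "A = kinner K c c"
  define B where "B = kinner K c d"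
  define C where "C = kinner K d d"
  have q: "\<And>l. 0 \<le> A + 2 * l * B + l^2 * C"
    using psd[of "c @ scl l d" for l] assms expand unfolding A_def B_def C_def by simp
  have C0: "C \<ge> 0" using psd assms unfolding C_def by simp
  show ?thesis
  proof (cases "C = 0")
    case True
    have "B = 0"
    proof (rule ccontr)
      assume "B \<noteq> 0"
      then have "0 \<le> A + 2 * (-(A+1)/(2*B)) * B" using q[of "-(A+1)/(2*B)"] True by simp
      then show False using \<open>B \<noteq> 0\<close> by (simp add: field_simps)
    qed
    then show ?thesis using True unfolding A_def B_def C_def by simp
  next
    case False
    then have Cp: "C > 0" using C0 by simp
    have "0 \<le> A + 2 * (-B/C) * B + (-B/C)^2 * C" by (rule q)
    then have "0 \<le> A - B^2 / C" using Cp by (simp add: power2_eq_square field_simps)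
    then have "B^2 \<le> A * C" using Cp by (simp add: field_simps)
    then show ?thesis unfolding A_def B_def C_def .
  qed
qed

lemma knorm_nonneg: "valid_combo c \<Longrightarrow> knorm K c \<ge> 0" by (simp add: knorm_def psd)

lemma knorm_sq: "valid_combo c \<Longrightarrow> (knorm K c)^2 = kinner K c c"
  by (simp add: knorm_def psd)

lemma CS': assumes "valid_combo c" "valid_combo d"
  shows "\<bar>kinner K c d\<bar> \<le> knorm K c * knorm K d"
proof -
  have "sqrt ((kinner K c d)^2) \<le> sqrt (kinner K c c * kinner K d d)"
    using CS[OF assms] by (rule real_sqrt_le_mono)
  then show ?thesis by (simp add: knorm_def real_sqrt_mult)
qed

lemma knorm_triangle: assumes "valid_combo c" "valid_combo d"
  shows "knorm K (c @ d) \<le> knorm K c + knorm K d"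
proof -
  have "kinner K (c @ d) (c @ d) = kinner K c c + 2 * kinner K c d + kinner K d d"
    by (simp add: kinner_append1 kinner_append2 ksym[of d c])
  also have "\<dots> \<le> (knorm K c)^2 + 2 * (knorm K c * knorm K d) + (knorm K d)^2"
    using CS'[OF assms] knorm_sq assms by auto
  also have "\<dots> = (knorm K c + knorm K d)^2" by (simp add: power2_eq_square algebra_simps)
  finally have "sqrt (kinner K (c @ d) (c @ d)) \<le> sqrt ((knorm K c + knorm K d)^2)"
    by (rule real_sqrt_le_mono)
  then show ?thesis using knorm_nonneg[of c] knorm_nonneg[of d] assms by (simp add: knorm_def[of K "c@d"])
qed

lemma kinner_cong: assumes "\<And>e. kinner K c e = kinner K c' e"
  shows "kinner K c c = kinner K c' c'"
  using assms[of c] assms[of c'] ksym[of c c'] by simp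

lemma knorm_cong: assumes "\<And>e. kinner K c e = kinner K c' e"
  shows "knorm K c = knorm K c'"
  using kinner_cong[OF assms] by (simp add: knorm_def)

lemma knorm_scl: "knorm K (scl r c) = \<bar>r\<bar> * knorm K c"
  by (simp add: knorm_def kinner_scl1 kinner_scl2 real_sqrt_mult mult.assoc[symmetric])

lemma knorm_diff_sym: "knorm K (combo_diff c d) = knorm K (combo_diff d c)"
proof -
  have "knorm K (combo_diff c d) = knorm K (scl (-1) (combo_diff d c))"
    by (rule knorm_cong) (simp add: combo_diff_scl kinner_append1 kinner_scl1)
  then show ?thesis by (simp add: knorm_scl)
qed

lemma knorm_rev_tri: assumes "valid_combo c" "valid_combo d"
  shows "\<bar>knorm K c - knorm K d\<bar> \<le> knorm K (combo_diff c d)"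
proof -
  have 1: "knorm K c \<le> knorm K (combo_diff c d) + knorm K d"
  proof -
    have "knorm K c = knorm K (combo_diff c d @ d)"
      by (rule knorm_cong) (simp add: combo_diff_scl kinner_append1 kinner_scl1)
    also have "\<dots> \<le> knorm K (combo_diff c d) + knorm K d" using assms by (intro knorm_triangle) auto
    finally show ?thesis .
  qed
  have 2: "knorm K d \<le> knorm K (combo_diff d c) + knorm K c"
  proof -
    have "knorm K d = knorm K (combo_diff d c @ c)"
      by (rule knorm_cong) (simp add: combo_diff_scl kinner_append1 kinner_scl1)
    also have "\<dots> \<le> knorm K (combo_diff d c) + knorm K c" using assms by (intro knorm_triangle) auto
    finally show ?thesis .
  qed
  show ?thesis using 1 2 knorm_diff_sym[of c d] by linarith
qed

lemma knorm_diff_tri: assumes "valid_combo a" "valid_combo b" "valid_combo c"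
  shows "knorm K (combo_diff a c) \<le> knorm K (combo_diff a b) + knorm K (combo_diff b c)"
proof -
  have "knorm K (combo_diff a c) = knorm K (combo_diff a b @ combo_diff b c)"
    by (rule knorm_cong) (simp add: combo_diff_scl kinner_append1 kinner_scl1)
  also have "\<dots> \<le> knorm K (combo_diff a b) + knorm K (combo_diff b c)" using assms by (intro knorm_triangle) auto
  finally show ?thesis .
qed

lemma Kdiag_cont: "continuous_on {0..1} (\<lambda>t. K t t)"
proof -
  have "continuous_on {0..1::real} ((\<lambda>(s, t). K s t) \<circ> (\<lambda>t. (t, t)))"
    by (rule continuous_on_compose) (auto intro!: continuous_intros continuous_on_subset[OF cont])
  then show ?thesis by (simp add: o_def)
qed

lemma Kbound: obtains B where "B > 0" "\<And>t::real. t \<in> {0..1} \<Longrightarrow> sqrt (K t t) \<le> B"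
proof -
  obtain B0 where B0: "B0 \<ge> 0" "\<And>t::real. t \<in> {0..1} \<Longrightarrow> norm (K t t) \<le> B0"
    using continuous_on_compact_bound[OF compact_Icc Kdiag_cont] by blast
  show ?thesis
  proof
    show "sqrt B0 + 1 > 0" using B0(1) by (metis real_sqrt_ge_zero add_nonneg_pos zero_less_one)
    fix t :: real assume "t \<in> {0..1}"
    then have "sqrt (K t t) \<le> sqrt B0" using B0(2)[of t] by (intro real_sqrt_le_mono) (auto simp: abs_le_iff)
    then show "sqrt (K t t) \<le> sqrt B0 + 1" by linarith
  qed
qed

lemma eval_bound: assumes "valid_combo c" "t \<in> {0..1}"
  shows "\<bar>combo_fun K c t\<bar> \<le> knorm K c * sqrt (K t t)"
proof -
  have "knorm K [(1, t)] = sqrt (K t t)" by (simp add: knorm_def)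
  then show ?thesis using CS'[of c "[(1,t)]"] assms by (simp add: combo_fun_kinner)
qed

lemma combo_fun_diff: "combo_fun K (combo_diff c d) t = combo_fun K c t - combo_fun K d t"
  unfolding combo_fun_kinner combo_diff_scl kinner_append1 kinner_scl1 by simp

lemma combo_fun_cont: assumes "valid_combo c" shows "continuous_on {0..1} (combo_fun K c)"
  using assms
proof (induct c)
  case Nil then show ?case by (simp add: combo_fun_def)
next
  case (Cons p c)
  obtain a s where p: "p = (a, s)" by (cases p)
  have s: "s \<in> {0..1}" using Cons.prems p by (simp add: valid_combo_def)
  have "continuous_on {0..1} ((\<lambda>(s, t). K s t) \<circ> (\<lambda>t. (s, t)))"
    apply (rule continuous_on_compose) using s by (auto intro!: continuous_intros continuous_on_subset[OF cont])
  then have "continuous_on {0..1} (\<lambda>t. K s t)" by (simp add: o_def)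
  moreover have "continuous_on {0..1} (combo_fun K c)" using Cons by (simp add: valid_combo_def)
  ultimately show ?case by (auto simp add: p combo_fun_def intro!: continuous_intros)
qed

end




lemma L2_cong: "(\<And>t. t \<in> {0..1} \<Longrightarrow> h t = g t) \<Longrightarrow> L2_dist_sq x h = L2_dist_sq x g"
  unfolding L2_dist_sq_def by (rule set_lebesgue_integral_cong) auto

lemma L2_integral: assumes "continuous_on {0..1} x" "continuous_on {0..1} g"
  shows "L2_dist_sq x g = integral {0..1} (\<lambda>t. (x t - g t)^2)"
proof -
  have "continuous_on {0..1} (\<lambda>t. (x t - g t)^2)" using assms by (intro continuous_intros)
  then have "set_integrable lborel {0..1} (\<lambda>t. (x t - g t)^2)"
    by (rule borel_integrable_atLeastAtMost')
  then show ?thesis unfolding L2_dist_sq_def by (rule set_borel_integral_eq_integral(2))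
qed

lemma L2_nonneg: "L2_dist_sq x g \<ge> 0"
  unfolding L2_dist_sq_def set_lebesgue_integral_def
  by (rule integral_nonneg_AE) (auto simp: indicator_def)

lemma tendsto_sl_zero: assumes "valid_combo c" "\<And>s. s \<in> {0..1} \<Longrightarrow> (\<lambda>m. g m s) \<longlonglongrightarrow> 0"
  shows "(\<lambda>m. \<Sum>(a, s)\<leftarrow>c. a * g m s) \<longlonglongrightarrow> (0::real)"
  using assms(1)
proof (induct c)
  case Nil then show ?case by simp
next
  case (Cons p c)
  obtain a s where p: "p = (a, s)" by (cases p)
  have s: "s \<in> {0..1}" using Cons.prems p by (simp add: valid_combo_def)
  have "(\<lambda>m. a * g m s + (\<Sum>(a, s)\<leftarrow>c. a * g m s)) \<longlonglongrightarrow> a * 0 + 0"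
    using Cons assms(2)[OF s] by (intro tendsto_intros) (auto simp: valid_combo_def)
  then show ?case by (simp add: p)
qed

context kern begin

lemma kinner_eval: "kinner K c d = (\<Sum>(a, s)\<leftarrow>c. a * combo_fun K d s)"
  unfolding kinner_alt combo_fun_def
proof (rule arg_cong[where f=sum_list], rule map_cong[OF refl])
  fix p assume "p \<in> set c"
  obtain a s where p: "p = (a, s)" by (cases p)
  have "(\<Sum>(b, t)\<leftarrow>d. b * K s t) = (\<Sum>(b, t)\<leftarrow>d. b * K t s)"
    by (rule arg_cong[where f=sum_list], rule map_cong[OF refl]) (auto simp: sym[of s])
  then show "(case p of (a, s) \<Rightarrow> a * (\<Sum>(b, t)\<leftarrow>d. b * K s t)) =
        (case p of (a, s) \<Rightarrow> a * (\<Sum>(a, sa)\<leftarrow>d. a * K sa s))" by (simp add: p)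
qed

definition cf :: "combo \<Rightarrow> real \<Rightarrow> real" where
  "cf c = (\<lambda>t. if t \<in> {0..1} then combo_fun K c t else 0)"

lemma approx_uniform: assumes "rkhs_approx K c f"
  shows "uniform_limit {0..1} (\<lambda>n. combo_fun K (c n)) f sequentially"
proof -
  obtain B where B: "B > 0" "\<And>t::real. t \<in> {0..1} \<Longrightarrow> sqrt (K t t) \<le> B" using Kbound by blast
  have val: "\<And>n. valid_combo (c n)" using assms by (simp add: rkhs_approx_def)
  have C: "\<forall>e>0.\<exists>N. \<forall>m (n::nat) x. N \<le> m \<and> N \<le> n \<and> x \<in> {0..1} \<longrightarrow>
      dist (combo_fun K (c m) x) (combo_fun K (c n) x) < e"
  proof (intro allI impI)
    fix e :: real assume e: "e > 0"
    then obtain N where N: "\<And>m n. m \<ge> N \<Longrightarrow> n \<ge> N \<Longrightarrow> knorm K (combo_diff (c m) (c n)) < e / B"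
      using assms B unfolding rkhs_approx_def by (meson divide_pos_pos)
    show "\<exists>N. \<forall>m n x. N \<le> m \<and> N \<le> n \<and> x \<in> {0..1} \<longrightarrow>
      dist (combo_fun K (c m) x) (combo_fun K (c n) x) < e"
    proof (intro exI allI impI)
      fix m n and x :: real assume h: "N \<le> m \<and> N \<le> n \<and> x \<in> {0..1}"
      have "dist (combo_fun K (c m) x) (combo_fun K (c n) x) = \<bar>combo_fun K (combo_diff (c m) (c n)) x\<bar>"
        by (simp add: dist_real_def combo_fun_diff)
      also have "\<dots> \<le> knorm K (combo_diff (c m) (c n)) * sqrt (K x x)"
        using h val by (intro eval_bound) auto
      also have "\<dots> \<le> knorm K (combo_diff (c m) (c n)) * B"
        using h val B by (intro mult_left_mono knorm_nonneg) auto
      also have "\<dots> < e / B * B" using N h B by (intro mult_strict_right_mono) auto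
      finally show "dist (combo_fun K (c m) x) (combo_fun K (c n) x) < e" using B by simp
    qed
  qed
  have P: "\<forall>x. x \<in> {0..1} \<longrightarrow> (\<forall>e>0. \<exists>N. \<forall>n. N \<le> n \<longrightarrow> dist (combo_fun K (c n) x) (f x) < e)"
    using assms unfolding rkhs_approx_def lim_sequentially by blast
  show ?thesis
    using uniformly_cauchy_imp_uniformly_convergent[OF C P]
    unfolding uniform_limit_sequentially_iff by blast
qed

lemma approx_cont: assumes "rkhs_approx K c f" shows "continuous_on {0..1} f"
proof (rule uniform_limit_theorem[OF _ approx_uniform[OF assms]])
  show "\<forall>\<^sub>F n in sequentially. continuous_on {0..1} (combo_fun K (c n))"
    using assms combo_fun_cont by (simp add: rkhs_approx_def)
qed simp

lemma approx_L2: assumes "rkhs_approx K c f" "continuous_on {0..1} x"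
  shows "(\<lambda>n. L2_dist_sq x (cf (c n))) \<longlonglongrightarrow> L2_dist_sq x f"
proof -
  have val: "\<And>n. valid_combo (c n)" using assms by (simp add: rkhs_approx_def)
  have fc: "continuous_on {0..1} f" by (rule approx_cont[OF assms(1)])
  have ul: "uniform_limit {0..1} (\<lambda>n t. x t - combo_fun K (c n) t) (\<lambda>t. x t - f t) sequentially"
    by (rule uniform_limit_minus[OF uniform_limit_const approx_uniform[OF assms(1)]])
  have bd: "bounded ((\<lambda>t. x t - f t) ` {0..1})"
    using fc assms(2) by (intro compact_imp_bounded compact_continuous_image continuous_on_diff compact_Icc)
  have ul2: "uniform_limit {0..1} (\<lambda>n t. (x t - combo_fun K (c n) t) * (x t - combo_fun K (c n) t))
     (\<lambda>t. (x t - f t) * (x t - f t)) sequentially"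
    by (rule uniform_lim_mult[OF ul ul bd bd])
  have cn: "\<And>n. continuous_on {0..1} (\<lambda>t. (x t - combo_fun K (c n) t) * (x t - combo_fun K (c n) t))"
    using combo_fun_cont[OF val] assms(2) by (intro continuous_on_mult continuous_on_diff)
  obtain I J where IJ: "\<And>n. ((\<lambda>t. (x t - combo_fun K (c n) t) * (x t - combo_fun K (c n) t)) has_integral I n) {0..1}"
    "((\<lambda>t. (x t - f t) * (x t - f t)) has_integral J) {0..1}" "I \<longlonglongrightarrow> J"
    using uniform_limit_integral[OF ul2 cn] by auto
  have "\<And>n. L2_dist_sq x (cf (c n)) = I n"
  proof -
    fix n
    have "L2_dist_sq x (cf (c n)) = L2_dist_sq x (combo_fun K (c n))"
      by (rule L2_cong) (simp add: cf_def)
    also have "\<dots> = integral {0..1} (\<lambda>t. (x t - combo_fun K (c n) t)^2)"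
      by (rule L2_integral[OF assms(2) combo_fun_cont[OF val]])
    also have "\<dots> = I n" using IJ(1)[of n] by (simp add: power2_eq_square integral_unique)
    finally show "L2_dist_sq x (cf (c n)) = I n" .
  qed
  moreover have "L2_dist_sq x f = J"
    using L2_integral[OF assms(2) fc] IJ(2) by (simp add: power2_eq_square integral_unique)
  ultimately show ?thesis using IJ(3) by simp
qed


lemma diff_diff_norm: assumes "valid_combo a" "valid_combo b" "valid_combo c" "valid_combo d"
  shows "knorm K (combo_diff (combo_diff a b) (combo_diff c d)) \<le> knorm K (combo_diff a c) + knorm K (combo_diff b d)"
proof -
  have "knorm K (combo_diff (combo_diff a b) (combo_diff c d)) = knorm K (combo_diff a c @ scl (-1) (combo_diff b d))"
    by (rule knorm_cong) (simp add: combo_diff_scl kinner_append1 kinner_scl1 algebra_simps)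
  also have "\<dots> \<le> knorm K (combo_diff a c) + knorm K (scl (-1) (combo_diff b d))"
    using assms by (intro knorm_triangle) auto
  also have "\<dots> = knorm K (combo_diff a c) + knorm K (combo_diff b d)" by (simp add: knorm_scl)
  finally show ?thesis .
qed

lemma approx_diff_zero: assumes c: "rkhs_approx K c f" and d: "rkhs_approx K d f"
  shows "(\<lambda>n. knorm K (combo_diff (c n) (d n))) \<longlonglongrightarrow> 0"
proof -
  define e where "e n = combo_diff (c n) (d n)" for n
  have vc: "\<And>n. valid_combo (c n)" and vd: "\<And>n. valid_combo (d n)"
    using c d by (auto simp: rkhs_approx_def)
  have ve: "\<And>n. valid_combo (e n)" using vc vd by (simp add: e_def)
  have cauchy: "\<exists>N. \<forall>m\<ge>N. \<forall>n\<ge>N. knorm K (combo_diff (e n) (e m)) < \<delta>" if dp: "\<delta> > 0" for \<delta>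
  proof -
    obtain N1 where N1: "\<And>m n. m \<ge> N1 \<Longrightarrow> n \<ge> N1 \<Longrightarrow> knorm K (combo_diff (c n) (c m)) < \<delta>/2"
      using c dp unfolding rkhs_approx_def by (meson half_gt_zero)
    obtain N2 where N2: "\<And>m n. m \<ge> N2 \<Longrightarrow> n \<ge> N2 \<Longrightarrow> knorm K (combo_diff (d n) (d m)) < \<delta>/2"
      using d dp unfolding rkhs_approx_def by (meson half_gt_zero)
    show ?thesis
    proof (intro exI allI impI)
      fix m n assume "max N1 N2 \<le> m" "max N1 N2 \<le> n"
      then have "knorm K (combo_diff (c n) (c m)) < \<delta>/2" "knorm K (combo_diff (d n) (d m)) < \<delta>/2"
        using N1 N2 by auto
      moreover have "knorm K (combo_diff (e n) (e m)) \<le> knorm K (combo_diff (c n) (c m)) + knorm K (combo_diff (d n) (d m))"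
        unfolding e_def by (intro diff_diff_norm vc vd)
      ultimately show "knorm K (combo_diff (e n) (e m)) < \<delta>" by simp
    qed
  qed
  have pw: "\<And>s. s \<in> {0..1} \<Longrightarrow> (\<lambda>m. combo_fun K (e m) s) \<longlonglongrightarrow> 0"
  proof -
    fix s :: real assume s: "s \<in> {0..1}"
    have "(\<lambda>m. combo_fun K (c m) s - combo_fun K (d m) s) \<longlonglongrightarrow> f s - f s"
      using c d s unfolding rkhs_approx_def by (intro tendsto_diff) auto
    then show "(\<lambda>m. combo_fun K (e m) s) \<longlonglongrightarrow> 0" by (simp add: e_def combo_fun_diff)
  qed
  obtain N1 where N1: "\<And>m n. m \<ge> N1 \<Longrightarrow> n \<ge> N1 \<Longrightarrow> knorm K (combo_diff (e n) (e m)) < 1"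
    using cauchy[of 1] by auto
  define R where "R = knorm K (e N1) + 1"
  have R: "R > 0" using knorm_nonneg[OF ve[of N1]] by (simp add: R_def add_nonneg_pos)
  have Rb: "knorm K (e n) \<le> R" if "n \<ge> N1" for n
  proof -
    have "\<bar>knorm K (e n) - knorm K (e N1)\<bar> \<le> knorm K (combo_diff (e n) (e N1))"
      by (intro knorm_rev_tri ve)
    then show ?thesis using N1[of N1 n] that by (simp add: R_def)
  qed
  show ?thesis
  proof (rule LIMSEQ_I)
    fix r :: real assume r: "r > 0"
    define \<delta> where "\<delta> = r^2 / (2 * R)"
    have dp: "\<delta> > 0" using r R by (simp add: \<delta>_def)
    obtain N2 where N2: "\<And>m n. m \<ge> N2 \<Longrightarrow> n \<ge> N2 \<Longrightarrow> knorm K (combo_diff (e n) (e m)) < \<delta>"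
      using cauchy[OF dp] by auto
    show "\<exists>N. \<forall>n\<ge>N. norm (knorm K (combo_diff (c n) (d n)) - 0) < r"
    proof (intro exI allI impI)
      fix n assume n: "max N1 N2 \<le> n"
      have le: "kinner K (e n) (e n) \<le> R * \<delta> + \<bar>kinner K (e n) (e m)\<bar>" if m: "m \<ge> max N1 N2" for m
      proof -
        have "kinner K (e n) (e n) = kinner K (e n) (combo_diff (e n) (e m)) + kinner K (e n) (e m)"
          by (simp add: combo_diff_scl kinner_append2 kinner_scl2)
        also have "\<dots> \<le> \<bar>kinner K (e n) (combo_diff (e n) (e m))\<bar> + \<bar>kinner K (e n) (e m)\<bar>" by simp
        also have "\<bar>kinner K (e n) (combo_diff (e n) (e m))\<bar> \<le> knorm K (e n) * knorm K (combo_diff (e n) (e m))"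
          using ve by (intro CS') auto
        also have "\<dots> \<le> R * \<delta>"
          using Rb[of n] N2[of m n] n m knorm_nonneg[OF ve] R knorm_nonneg[of "combo_diff (e n) (e m)"] ve
          by (intro mult_mono) auto
        finally show ?thesis by simp
      qed
      have lim: "(\<lambda>m. R * \<delta> + \<bar>kinner K (e n) (e m)\<bar>) \<longlonglongrightarrow> R * \<delta> + \<bar>0\<bar>"
        unfolding kinner_eval by (intro tendsto_intros tendsto_sl_zero ve pw)
      have "\<exists>N. \<forall>m\<ge>N. kinner K (e n) (e n) \<le> R * \<delta> + \<bar>kinner K (e n) (e m)\<bar>"
        using le by (intro exI[of _ "max N1 N2"]) auto
      then have "kinner K (e n) (e n) \<le> R * \<delta> + \<bar>0\<bar>" by (rule LIMSEQ_le_const[OF lim])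
      then have "kinner K (e n) (e n) \<le> R * \<delta>" by simp
      also have "R * \<delta> < r^2" using R r by (simp add: \<delta>_def)
      finally have "sqrt (kinner K (e n) (e n)) < sqrt (r^2)" by (rule real_sqrt_less_mono)
      then show "norm (knorm K (combo_diff (c n) (d n)) - 0) < r"
        using r knorm_nonneg[OF ve] by (simp add: knorm_def e_def)
    qed
  qed
qed

lemma approx_norm: assumes c: "rkhs_approx K c f"
  shows "(\<lambda>n. knorm K (c n)) \<longlonglongrightarrow> rkhs_norm K f"
proof -
  have vc: "\<And>n. valid_combo (c n)" using c by (simp add: rkhs_approx_def)
  have "Cauchy (\<lambda>n. knorm K (c n))"
  proof (rule CauchyI)
    fix e :: real assume "e > 0"
    then obtain N where N: "\<And>m n. m \<ge> N \<Longrightarrow> n \<ge> N \<Longrightarrow> knorm K (combo_diff (c m) (c n)) < e"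
      using c unfolding rkhs_approx_def by meson
    show "\<exists>M. \<forall>m\<ge>M. \<forall>n\<ge>M. norm (knorm K (c m) - knorm K (c n)) < e"
    proof (intro exI allI impI)
      fix m n assume "N \<le> m" "N \<le> n"
      then show "norm (knorm K (c m) - knorm K (c n)) < e"
        using N[of m n] knorm_rev_tri[OF vc[of m] vc[of n]] by simp
    qed
  qed
  then obtain r where r: "(\<lambda>n. knorm K (c n)) \<longlonglongrightarrow> r"
    using Cauchy_convergent_iff convergent_def by blast
  have P: "\<forall>d. rkhs_approx K d f \<longrightarrow> (\<lambda>n. knorm K (d n)) \<longlonglongrightarrow> r"
  proof (intro allI impI)
    fix d assume d: "rkhs_approx K d f"
    have vd: "\<And>n. valid_combo (d n)" using d by (simp add: rkhs_approx_def)
    have "(\<lambda>n. knorm K (d n) - knorm K (c n)) \<longlonglongrightarrow> 0"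
    proof (rule Lim_null_comparison)
      show "\<forall>\<^sub>F n in sequentially. norm (knorm K (d n) - knorm K (c n)) \<le> knorm K (combo_diff (d n) (c n))"
        using knorm_rev_tri[OF vd vc] by simp
      show "(\<lambda>n. knorm K (combo_diff (d n) (c n))) \<longlonglongrightarrow> 0" by (rule approx_diff_zero[OF d c])
    qed
    then have "(\<lambda>n. (knorm K (d n) - knorm K (c n)) + knorm K (c n)) \<longlonglongrightarrow> 0 + r"
      by (intro tendsto_add r)
    then show "(\<lambda>n. knorm K (d n)) \<longlonglongrightarrow> r" by simp
  qed
  have "rkhs_norm K f = r"
    unfolding rkhs_norm_def
  proof (rule the_equality)
    show "\<forall>d. rkhs_approx K d f \<longrightarrow> (\<lambda>n. knorm K (d n)) \<longlonglongrightarrow> r" by (rule P)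
    fix r' assume "\<forall>d. rkhs_approx K d f \<longrightarrow> (\<lambda>n. knorm K (d n)) \<longlonglongrightarrow> r'"
    then have "(\<lambda>n. knorm K (c n)) \<longlonglongrightarrow> r'" using c by blast
    then show "r' = r" using r by (rule LIMSEQ_unique)
  qed
  then show ?thesis using r by simp
qed

lemma cf_approx: assumes "valid_combo c" shows "rkhs_approx K (\<lambda>n. c) (cf c)"
proof -
  have "knorm K (combo_diff c c) = knorm K []"
    by (rule knorm_cong) (simp add: combo_diff_scl kinner_append1 kinner_scl1)
  then show ?thesis using assms by (auto simp: rkhs_approx_def cf_def)
qed

lemma cf_rkhs: assumes "valid_combo c" shows "cf c \<in> rkhs K" "rkhs_norm K (cf c) = knorm K c"
proof -
  show "cf c \<in> rkhs K" using cf_approx[OF assms] by (auto simp: rkhs_def cf_def)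
  show "rkhs_norm K (cf c) = knorm K c"
    using approx_norm[OF cf_approx[OF assms]] LIMSEQ_const_iff by metis
qed

end



definition mid :: "combo \<Rightarrow> combo \<Rightarrow> combo" where
  "mid c d = scl (1/2) (c @ d)"

lemma valid_mid[simp]: "valid_combo (mid c d) \<longleftrightarrow> valid_combo c \<and> valid_combo d"
  by (simp add: mid_def)

lemma mid_fun: "combo_fun K (mid c d) t = (combo_fun K c t + combo_fun K d t) / 2"
  unfolding combo_fun_kinner mid_def kinner_scl1 kinner_append1 by simp

context kern begin

definition Jf :: "(real \<Rightarrow> real) \<Rightarrow> real \<Rightarrow> (real \<Rightarrow> real) \<Rightarrow> real" where
  "Jf x \<beta> f = L2_dist_sq x f + \<beta> * (rkhs_norm K f)^2"

lemma mid_norm: assumes "valid_combo c" "valid_combo d"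
  shows "(knorm K (mid c d))^2 = ((knorm K c)^2 + (knorm K d)^2) / 2 - (knorm K (combo_diff c d))^2 / 4"
  using assms
  apply (simp add: knorm_sq mid_def combo_diff_scl kinner_append1 kinner_append2 kinner_scl1 kinner_scl2
      ksym[of d c] algebra_simps)
  by (simp add: field_simps)

lemma mid_L2: assumes x: "continuous_on {0..1} x" and v: "valid_combo c" "valid_combo d"
  shows "L2_dist_sq x (cf (mid c d)) \<le> (L2_dist_sq x (cf c) + L2_dist_sq x (cf d)) / 2"
proof -
  have cc: "continuous_on {0..1} (combo_fun K c)" "continuous_on {0..1} (combo_fun K d)"
    "continuous_on {0..1} (combo_fun K (mid c d))" using v by (auto intro!: combo_fun_cont)
  have eq: "\<And>e. L2_dist_sq x (cf e) = L2_dist_sq x (combo_fun K e)"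
    by (rule L2_cong) (simp add: cf_def)
  define F where "F t = (x t - combo_fun K c t)^2" for t
  define G where "G t = (x t - combo_fun K d t)^2" for t
  define H where "H t = (x t - combo_fun K (mid c d) t)^2" for t
  have iF: "(F has_integral integral {0..1} F) {0..1}" unfolding F_def
    using x cc by (intro integrable_integral integrable_continuous_interval continuous_intros)
  have iG: "(G has_integral integral {0..1} G) {0..1}" unfolding G_def
    using x cc by (intro integrable_integral integrable_continuous_interval continuous_intros)
  have iH: "(H has_integral integral {0..1} H) {0..1}" unfolding H_def
    using x cc by (intro integrable_integral integrable_continuous_interval continuous_intros)
  have iFG: "((\<lambda>t. 1/2 * (F t + G t)) has_integral (1/2 * (integral {0..1} F + integral {0..1} G))) {0..1}"
    by (intro has_integral_mult_right has_integral_add iF iG)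
  have "integral {0..1} H \<le> 1/2 * (integral {0..1} F + integral {0..1} G)"
  proof (rule has_integral_le[OF iH iFG])
    fix t
    define a where "a = combo_fun K c t"
    define b where "b = combo_fun K d t"
    have "1/2 * ((x t - a)^2 + (x t - b)^2) - (x t - (a + b) / 2)^2 = (a - b)^2 / 4"
      by (simp add: power2_eq_square field_simps)
    moreover have "(a - b)^2 / 4 \<ge> 0" by simp
    ultimately show "H t \<le> 1/2 * (F t + G t)"
      unfolding H_def F_def G_def mid_fun a_def b_def by linarith
  qed
  moreover have "L2_dist_sq x (cf c) = integral {0..1} F" unfolding eq F_def by (rule L2_integral[OF x cc(1)])
  moreover have "L2_dist_sq x (cf d) = integral {0..1} G" unfolding eq G_def by (rule L2_integral[OF x cc(2)])
  moreover have "L2_dist_sq x (cf (mid c d)) = integral {0..1} H" unfolding eq H_def by (rule L2_integral[OF x cc(3)])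
  ultimately show ?thesis by simp
qed

lemma Jf_cf: "valid_combo c \<Longrightarrow> Jf x \<beta> (cf c) = L2_dist_sq x (cf c) + \<beta> * (knorm K c)^2"
  by (simp add: Jf_def cf_rkhs)

lemma mid_J: assumes x: "continuous_on {0..1} x" and b: "\<beta> \<ge> 0" and v: "valid_combo c" "valid_combo d"
  shows "Jf x \<beta> (cf (mid c d)) \<le> (Jf x \<beta> (cf c) + Jf x \<beta> (cf d)) / 2 - \<beta> * (knorm K (combo_diff c d))^2 / 4"
proof -
  have vm: "valid_combo (mid c d)" using v by simp
  have e1: "\<beta> * (knorm K (mid c d))^2 = (\<beta> * (knorm K c)^2 + \<beta> * (knorm K d)^2) / 2 - \<beta> * (knorm K (combo_diff c d))^2 / 4"
    by (subst mid_norm[OF v]) (simp add: field_simps)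
  have e2: "Jf x \<beta> (cf (mid c d)) = L2_dist_sq x (cf (mid c d)) + \<beta> * (knorm K (mid c d))^2"
    by (rule Jf_cf[OF vm])
  have e3: "Jf x \<beta> (cf c) = L2_dist_sq x (cf c) + \<beta> * (knorm K c)^2" by (rule Jf_cf[OF v(1)])
  have e4: "Jf x \<beta> (cf d) = L2_dist_sq x (cf d) + \<beta> * (knorm K d)^2" by (rule Jf_cf[OF v(2)])
  have l: "L2_dist_sq x (cf (mid c d)) \<le> (L2_dist_sq x (cf c) + L2_dist_sq x (cf d)) / 2" by (rule mid_L2[OF x v])
  have ar: "\<And>L P Lc Ld Q R S::real. P = (Q+R)/2 - S/4 \<Longrightarrow> L \<le> (Lc+Ld)/2 \<Longrightarrow> L + P \<le> (Lc + Q + (Ld + R))/2 - S/4"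
    by (simp add: field_simps)
  show ?thesis unfolding e2 e3 e4 by (rule ar[OF e1 l])
qed

lemma approx_J: assumes "rkhs_approx K c f" "continuous_on {0..1} x"
  shows "(\<lambda>n. Jf x \<beta> (cf (c n))) \<longlonglongrightarrow> Jf x \<beta> f"
proof -
  have v: "\<And>n. valid_combo (c n)" using assms by (simp add: rkhs_approx_def)
  have "(\<lambda>n. L2_dist_sq x (cf (c n)) + \<beta> * (knorm K (c n))^2) \<longlonglongrightarrow> L2_dist_sq x f + \<beta> * (rkhs_norm K f)^2"
    by (intro tendsto_intros approx_L2[OF assms] approx_norm[OF assms(1)])
  moreover have "(\<lambda>n. Jf x \<beta> (cf (c n))) = (\<lambda>n. L2_dist_sq x (cf (c n)) + \<beta> * (knorm K (c n))^2)"
    using v by (simp add: Jf_cf)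
  ultimately show ?thesis by (simp add: Jf_def[of x \<beta> f])
qed

lemma Jf_nonneg: "\<beta> \<ge> 0 \<Longrightarrow> Jf x \<beta> f \<ge> 0"
  unfolding Jf_def using L2_nonneg[of x f] by simp

lemma rkhs_approx_ex: "f \<in> rkhs K \<Longrightarrow> \<exists>c. rkhs_approx K c f"
  by (simp add: rkhs_def)

lemma cauchy_limit:
  assumes v: "\<And>n. valid_combo (c n)"
    and C: "\<And>e. e > 0 \<Longrightarrow> \<exists>N. \<forall>m\<ge>N. \<forall>n\<ge>N. knorm K (combo_diff (c m) (c n)) < e"
  shows "\<exists>f. f \<in> rkhs K \<and> rkhs_approx K c f"
proof -
  obtain B where B: "B > 0" "\<And>t::real. t \<in> {0..1} \<Longrightarrow> sqrt (K t t) \<le> B" using Kbound by blast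
  have conv: "convergent (\<lambda>n. combo_fun K (c n) t)" if t: "t \<in> {0..1}" for t
  proof -
    have "Cauchy (\<lambda>n. combo_fun K (c n) t)"
    proof (rule CauchyI)
      fix e :: real assume e: "e > 0"
      then obtain N where N: "\<And>m n. m \<ge> N \<Longrightarrow> n \<ge> N \<Longrightarrow> knorm K (combo_diff (c m) (c n)) < e / B"
        using C[of "e/B"] B by auto
      show "\<exists>M. \<forall>m\<ge>M. \<forall>n\<ge>M. norm (combo_fun K (c m) t - combo_fun K (c n) t) < e"
      proof (intro exI allI impI)
        fix m n assume mn: "N \<le> m" "N \<le> n"
        have "norm (combo_fun K (c m) t - combo_fun K (c n) t) = \<bar>combo_fun K (combo_diff (c m) (c n)) t\<bar>"
          by (simp add: combo_fun_diff)
        also have "\<dots> \<le> knorm K (combo_diff (c m) (c n)) * sqrt (K t t)"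
          using v t by (intro eval_bound) auto
        also have "\<dots> \<le> knorm K (combo_diff (c m) (c n)) * B"
          using t v B by (intro mult_left_mono knorm_nonneg) auto
        also have "\<dots> < e / B * B" using N[OF mn] B by (intro mult_strict_right_mono) auto
        finally show "norm (combo_fun K (c m) t - combo_fun K (c n) t) < e" using B by simp
      qed
    qed
    then show ?thesis by (simp add: Cauchy_convergent_iff)
  qed
  define f where "f t = (if t \<in> {0..1} then lim (\<lambda>n. combo_fun K (c n) t) else 0)" for t
  have "rkhs_approx K c f"
    unfolding rkhs_approx_def
  proof (intro conjI ballI allI impI)
    show "\<And>n. valid_combo (c n)" by (rule v)
    show "\<And>e. e > 0 \<Longrightarrow> \<exists>N. \<forall>m\<ge>N. \<forall>n\<ge>N. knorm K (combo_diff (c m) (c n)) < e" by (rule C)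
    fix t :: real assume t: "t \<in> {0..1}"
    show "(\<lambda>n. combo_fun K (c n) t) \<longlonglongrightarrow> f t"
      using conv[OF t] t by (simp add: f_def convergent_LIMSEQ_iff)
  qed
  moreover have "f \<in> rkhs K" using calculation unfolding rkhs_def by (auto simp: f_def)
  ultimately show ?thesis by blast
qed

end



context kern begin

lemma cf_Nil: "cf [] = (\<lambda>t. 0)" by (auto simp: cf_def combo_fun_def fun_eq_iff)

lemma exists_min: assumes x: "continuous_on {0..1} x" and b: "\<beta> > 0"
  shows "\<exists>f\<in>rkhs K. \<forall>g\<in>rkhs K. Jf x \<beta> f \<le> Jf x \<beta> g"
proof -
  define S where "S = Jf x \<beta> ` rkhs K"
  define V where "V = Inf S"
  have ne: "S \<noteq> {}" using cf_rkhs(1)[of "[]"] by (auto simp: S_def)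
  have bdd: "bdd_below S" unfolding S_def using Jf_nonneg b
    by (intro bdd_belowI[of _ 0]) auto
  have low: "V \<le> Jf x \<beta> g" if "g \<in> rkhs K" for g
    unfolding V_def S_def using that bdd[unfolded S_def] by (intro cInf_lower) auto
  have lowc: "V \<le> Jf x \<beta> (cf c)" if "valid_combo c" for c
    using low cf_rkhs(1)[OF that] by blast
  have hc: "\<exists>c. valid_combo c \<and> Jf x \<beta> (cf c) < V + inverse (real (Suc n))" for n
  proof -
    have "Inf S < V + inverse (real (Suc n))" by (simp add: V_def)
    then obtain g where g: "g \<in> rkhs K" "Jf x \<beta> g < V + inverse (real (Suc n))"
      using cInf_lessD[OF ne] unfolding S_def by blast
    obtain d where d: "rkhs_approx K d g" using rkhs_approx_ex[OF g(1)] by blast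
    have "eventually (\<lambda>k. Jf x \<beta> (cf (d k)) < V + inverse (real (Suc n))) sequentially"
      using order_tendstoD(2)[OF approx_J[OF d x] g(2)] .
    then obtain k where "Jf x \<beta> (cf (d k)) < V + inverse (real (Suc n))"
      by (auto simp: eventually_sequentially)
    moreover have "valid_combo (d k)" using d by (simp add: rkhs_approx_def)
    ultimately show ?thesis by blast
  qed
  then obtain c where c: "\<And>n. valid_combo (c n)" "\<And>n. Jf x \<beta> (cf (c n)) < V + inverse (real (Suc n))"
    by metis
  have C: "\<exists>N. \<forall>m\<ge>N. \<forall>n\<ge>N. knorm K (combo_diff (c m) (c n)) < e" if e: "e > 0" for e
  proof -
    have "0 < \<beta> * e^2 / 4" using e b by (simp add: mult_pos_pos)
    then obtain N where N: "inverse (real (Suc N)) < \<beta> * e^2 / 4" using reals_Archimedean by blast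
    show ?thesis
    proof (intro exI allI impI)
      fix m n assume mn: "N \<le> m" "N \<le> n"
      have im: "inverse (real (Suc m)) \<le> inverse (real (Suc N))" using mn by (intro le_imp_inverse_le) auto
      have iN: "inverse (real (Suc n)) \<le> inverse (real (Suc N))" using mn by (intro le_imp_inverse_le) auto
      define k where "k = knorm K (combo_diff (c m) (c n))"
      define A where "A = Jf x \<beta> (cf (c m))"
      define B where "B = Jf x \<beta> (cf (c n))"
      have "V \<le> Jf x \<beta> (cf (mid (c m) (c n)))" using lowc[of "mid (c m) (c n)"] c(1)[of m] c(1)[of n] by simp
      also have "\<dots> \<le> (A + B) / 2 - \<beta> * k^2 / 4"
        unfolding A_def B_def k_def by (rule mid_J[OF x less_imp_le[OF b] c(1)[of m] c(1)[of n]])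
      finally have h1: "V \<le> A / 2 + B / 2 - \<beta> * k^2 / 4" by (simp add: add_divide_distrib)
      have h2: "A < V + inverse (real (Suc N))" using c(2)[of m] im unfolding A_def by linarith
      have h3: "B < V + inverse (real (Suc N))" using c(2)[of n] iN unfolding B_def by linarith
      have "\<beta> * k^2 / 4 < \<beta> * e^2 / 4" using h1 h2 h3 N by linarith
      then have "\<beta> * k^2 < \<beta> * e^2" by linarith
      then have kk: "k^2 < e^2" using mult_less_cancel_left_pos[OF b] by blast
      have "0 \<le> e" using e by linarith
      then have "k < e" by (rule power_less_imp_less_base[OF kk])
      then show "knorm K (combo_diff (c m) (c n)) < e" unfolding k_def .
    qed
  qed
  obtain f where f: "f \<in> rkhs K" "rkhs_approx K c f" using cauchy_limit[OF c(1) C] by blast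
  have l1: "(\<lambda>n. Jf x \<beta> (cf (c n))) \<longlonglongrightarrow> Jf x \<beta> f" by (rule approx_J[OF f(2) x])
  have l2: "(\<lambda>n. Jf x \<beta> (cf (c n))) \<longlonglongrightarrow> V"
  proof (rule tendsto_sandwich[of "\<lambda>n. V" _ _ "\<lambda>n. V + inverse (real (Suc n))"])
    show "\<forall>\<^sub>F n in sequentially. V \<le> Jf x \<beta> (cf (c n))" using lowc c by simp
    show "\<forall>\<^sub>F n in sequentially. Jf x \<beta> (cf (c n)) \<le> V + inverse (real (Suc n))"
      using c(2) by (simp add: less_imp_le)
    show "(\<lambda>n. V) \<longlonglongrightarrow> V" by simp
    show "(\<lambda>n. V + inverse (real (Suc n))) \<longlonglongrightarrow> V"
      using tendsto_add[OF tendsto_const LIMSEQ_inverse_real_of_nat, of V] by simp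
  qed
  have "Jf x \<beta> f = V" using LIMSEQ_unique[OF l1 l2] .
  then show ?thesis using f(1) low by auto
qed

lemma strong_est:
  assumes x: "continuous_on {0..1} x" and b: "\<beta> > 0"
    and fmin: "\<And>h. h \<in> rkhs K \<Longrightarrow> Jf x \<beta> f \<le> Jf x \<beta> h"
    and c: "rkhs_approx K c f" and d: "rkhs_approx K d g"
  shows "\<beta> * (knorm K (combo_diff (c n) (d n)))^2 / 4 \<le> (Jf x \<beta> (cf (c n)) + Jf x \<beta> (cf (d n))) / 2 - Jf x \<beta> f"
proof -
  have v: "valid_combo (c n)" "valid_combo (d n)" using c d by (auto simp: rkhs_approx_def)
  have "Jf x \<beta> f \<le> Jf x \<beta> (cf (mid (c n) (d n)))" using fmin cf_rkhs(1) v by simp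
  also have "\<dots> \<le> (Jf x \<beta> (cf (c n)) + Jf x \<beta> (cf (d n))) / 2 - \<beta> * (knorm K (combo_diff (c n) (d n)))^2 / 4"
    using mid_J[OF x _ v] b by simp
  finally show ?thesis by linarith
qed

lemma norm_est:
  assumes x: "continuous_on {0..1} x" and b: "\<beta> > 0"
    and f: "f \<in> rkhs K" and fmin: "\<And>h. h \<in> rkhs K \<Longrightarrow> Jf x \<beta> f \<le> Jf x \<beta> h"
    and g: "g \<in> rkhs K"
  shows "(rkhs_norm K f - rkhs_norm K g)^2 \<le> 2 / \<beta> * (Jf x \<beta> g - Jf x \<beta> f)"
proof -
  obtain c where c: "rkhs_approx K c f" using rkhs_approx_ex[OF f] by blast
  obtain d where d: "rkhs_approx K d g" using rkhs_approx_ex[OF g] by blast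
  have v: "\<And>n. valid_combo (c n)" "\<And>n. valid_combo (d n)" using c d by (auto simp: rkhs_approx_def)
  have le: "(knorm K (c n) - knorm K (d n))^2 \<le> 4 / \<beta> * ((Jf x \<beta> (cf (c n)) + Jf x \<beta> (cf (d n))) / 2 - Jf x \<beta> f)" for n
  proof -
    have "(knorm K (c n) - knorm K (d n))^2 \<le> (knorm K (combo_diff (c n) (d n)))^2"
      using knorm_rev_tri[OF v(1) v(2)] knorm_nonneg[of "combo_diff (c n) (d n)"] v
      by (subst abs_le_square_iff[symmetric]) auto
    also have "\<dots> \<le> 4 / \<beta> * ((Jf x \<beta> (cf (c n)) + Jf x \<beta> (cf (d n))) / 2 - Jf x \<beta> f)"
      using strong_est[OF x b fmin c d, of n] b by (simp add: field_simps)
    finally show ?thesis .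
  qed
  have l1: "(\<lambda>n. (knorm K (c n) - knorm K (d n))^2) \<longlonglongrightarrow> (rkhs_norm K f - rkhs_norm K g)^2"
    by (intro tendsto_intros approx_norm c d)
  have l2: "(\<lambda>n. 4 / \<beta> * ((Jf x \<beta> (cf (c n)) + Jf x \<beta> (cf (d n))) / 2 - Jf x \<beta> f))
      \<longlonglongrightarrow> 4 / \<beta> * ((Jf x \<beta> f + Jf x \<beta> g) / 2 - Jf x \<beta> f)"
    by (intro tendsto_intros approx_J c d x) auto
  have "(rkhs_norm K f - rkhs_norm K g)^2 \<le> 4 / \<beta> * ((Jf x \<beta> f + Jf x \<beta> g) / 2 - Jf x \<beta> f)"
    using LIMSEQ_le[OF l1 l2] le by auto
  also have "\<dots> = 2 / \<beta> * (Jf x \<beta> g - Jf x \<beta> f)" using b by (simp add: field_simps)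
  finally show ?thesis .
qed

lemma unique_min:
  assumes x: "continuous_on {0..1} x" and b: "\<beta> > 0"
    and f: "f \<in> rkhs K" and fmin: "\<And>h. h \<in> rkhs K \<Longrightarrow> Jf x \<beta> f \<le> Jf x \<beta> h"
    and g: "g \<in> rkhs K" and gmin: "\<And>h. h \<in> rkhs K \<Longrightarrow> Jf x \<beta> g \<le> Jf x \<beta> h"
  shows "f = g"
proof
  fix t :: real
  show "f t = g t"
  proof (cases "t \<in> {0..1}")
    case False
    then show ?thesis using f g by (simp add: rkhs_def)
  next
    case t: True
    obtain B where B: "B > 0" "\<And>t::real. t \<in> {0..1} \<Longrightarrow> sqrt (K t t) \<le> B" using Kbound by blast
    obtain c where c: "rkhs_approx K c f" using rkhs_approx_ex[OF f] by blast
    obtain d where d: "rkhs_approx K d g" using rkhs_approx_ex[OF g] by blast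
    have v: "\<And>n. valid_combo (c n)" "\<And>n. valid_combo (d n)" using c d by (auto simp: rkhs_approx_def)
    have eq: "Jf x \<beta> f = Jf x \<beta> g" using fmin[OF g] gmin[OF f] by simp
    define w where "w n = 4 / \<beta> * ((Jf x \<beta> (cf (c n)) + Jf x \<beta> (cf (d n))) / 2 - Jf x \<beta> f)" for n
    have wl: "w \<longlonglongrightarrow> 4 / \<beta> * ((Jf x \<beta> f + Jf x \<beta> g) / 2 - Jf x \<beta> f)"
      unfolding w_def by (intro tendsto_intros approx_J c d x) auto
    then have wl0: "w \<longlonglongrightarrow> 0" using eq by simp
    have kw: "knorm K (combo_diff (c n) (d n)) \<le> sqrt (w n)" for n
    proof -
      have "(knorm K (combo_diff (c n) (d n)))^2 \<le> w n"
        using strong_est[OF x b fmin c d, of n] b unfolding w_def by (simp add: field_simps)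
      then have "sqrt ((knorm K (combo_diff (c n) (d n)))^2) \<le> sqrt (w n)" by (rule real_sqrt_le_mono)
      then show ?thesis using knorm_nonneg[of "combo_diff (c n) (d n)"] v by simp
    qed
    have "(\<lambda>n. combo_fun K (c n) t - combo_fun K (d n) t) \<longlonglongrightarrow> 0"
    proof (rule Lim_null_comparison)
      show "\<forall>\<^sub>F n in sequentially. norm (combo_fun K (c n) t - combo_fun K (d n) t) \<le> B * sqrt (w n)"
      proof (intro always_eventually allI)
        fix n
        have "norm (combo_fun K (c n) t - combo_fun K (d n) t) = \<bar>combo_fun K (combo_diff (c n) (d n)) t\<bar>"
          by (simp add: combo_fun_diff)
        also have "\<dots> \<le> knorm K (combo_diff (c n) (d n)) * sqrt (K t t)"
          using v t by (intro eval_bound) auto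
        also have "\<dots> \<le> sqrt (w n) * B"
        proof (rule mult_mono)
          show "knorm K (combo_diff (c n) (d n)) \<le> sqrt (w n)" by (rule kw)
          show "sqrt (K t t) \<le> B" using B t by blast
          have "0 \<le> knorm K (combo_diff (c n) (d n))" using v knorm_nonneg by simp
          then show "0 \<le> sqrt (w n)" using kw[of n] by linarith
          have "0 \<le> kinner K [(1, t)] [(1, t)]" using psd[of "[(1, t)]"] t by simp
          then show "0 \<le> sqrt (K t t)" by simp
        qed
        finally show "norm (combo_fun K (c n) t - combo_fun K (d n) t) \<le> B * sqrt (w n)" by (simp add: mult.commute)
      qed
      show "(\<lambda>n. B * sqrt (w n)) \<longlonglongrightarrow> 0"
        using tendsto_mult[OF tendsto_const tendsto_real_sqrt[OF wl0], of B] by simp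
    qed
    moreover have "(\<lambda>n. combo_fun K (c n) t - combo_fun K (d n) t) \<longlonglongrightarrow> f t - g t"
      using c d t unfolding rkhs_approx_def by (intro tendsto_diff) auto
    ultimately have "f t - g t = 0" using LIMSEQ_unique by blast
    then show ?thesis by simp
  qed
qed

lemma reg_fit_min: assumes x: "continuous_on {0..1} x" and b: "\<beta> > 0"
  shows "reg_fit K x \<beta> \<in> rkhs K" "\<And>g. g \<in> rkhs K \<Longrightarrow> Jf x \<beta> (reg_fit K x \<beta>) \<le> Jf x \<beta> g"
proof -
  have ex1: "\<exists>!f. f \<in> rkhs K \<and> (\<forall>g\<in>rkhs K. Jf x \<beta> f \<le> Jf x \<beta> g)"
  proof (rule ex_ex1I)
    show "\<exists>f. f \<in> rkhs K \<and> (\<forall>g\<in>rkhs K. Jf x \<beta> f \<le> Jf x \<beta> g)" using exists_min[OF x b] by blast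
    fix f g assume "f \<in> rkhs K \<and> (\<forall>g\<in>rkhs K. Jf x \<beta> f \<le> Jf x \<beta> g)" "g \<in> rkhs K \<and> (\<forall>h\<in>rkhs K. Jf x \<beta> g \<le> Jf x \<beta> h)"
    then show "f = g" using unique_min[OF x b] by blast
  qed
  have "reg_fit K x \<beta> \<in> rkhs K \<and> (\<forall>g\<in>rkhs K. Jf x \<beta> (reg_fit K x \<beta>) \<le> Jf x \<beta> g)"
    unfolding reg_fit_def using theI'[OF ex1[unfolded Jf_def]] by (simp add: Jf_def)
  then show "reg_fit K x \<beta> \<in> rkhs K" "\<And>g. g \<in> rkhs K \<Longrightarrow> Jf x \<beta> (reg_fit K x \<beta>) \<le> Jf x \<beta> g" by auto
qed

end



context kern begin

lemma norm_cont:
  assumes x: "continuous_on {0..1} x" and pos: "\<And>j. \<alpha>s j > 0" and lim: "\<alpha>s \<longlonglongrightarrow> \<alpha>" and a: "\<alpha> > 0"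
  shows "(\<lambda>j. rkhs_norm K (reg_fit K x (\<alpha>s j))) \<longlonglongrightarrow> rkhs_norm K (reg_fit K x \<alpha>)"
proof -
  define N where "N \<beta> = rkhs_norm K (reg_fit K x \<beta>)" for \<beta>
  define L where "L \<beta> = L2_dist_sq x (reg_fit K x \<beta>)" for \<beta>
  define C0 where "C0 = L2_dist_sq x (cf [])"
  have JN: "Jf x \<gamma> (reg_fit K x \<beta>) = L \<beta> + \<gamma> * (N \<beta>)^2" for \<gamma> \<beta>
    by (simp add: Jf_def L_def N_def)
  have bnd: "(N \<gamma>)^2 \<le> C0 / \<gamma>" if g: "\<gamma> > 0" for \<gamma>
  proof -
    have "Jf x \<gamma> (reg_fit K x \<gamma>) \<le> Jf x \<gamma> (cf [])"
      using reg_fit_min(2)[OF x g] cf_rkhs(1)[of "[]"] by simp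
    also have "\<dots> = C0" by (simp add: Jf_cf C0_def)
    finally have "L \<gamma> + \<gamma> * (N \<gamma>)^2 \<le> C0" by (simp add: JN)
    moreover have "L \<gamma> \<ge> 0" by (simp add: L_def L2_nonneg)
    ultimately have "\<gamma> * (N \<gamma>)^2 \<le> C0" by linarith
    then show ?thesis using g by (simp add: field_simps)
  qed
  have est: "(N \<alpha> - N \<gamma>)^2 \<le> 2 / \<alpha> * (\<bar>\<gamma> - \<alpha>\<bar> * ((N \<alpha>)^2 + C0 / \<gamma>))" if g: "\<gamma> > 0" for \<gamma>
  proof -
    have ch1: "(N \<alpha> - N \<gamma>)^2 \<le> 2 / \<alpha> * (Jf x \<alpha> (reg_fit K x \<gamma>) - Jf x \<alpha> (reg_fit K x \<alpha>))"
      unfolding N_def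
      by (rule norm_est[OF x a reg_fit_min(1)[OF x a] reg_fit_min(2)[OF x a] reg_fit_min(1)[OF x g]])
    have "Jf x \<alpha> (reg_fit K x \<gamma>) - Jf x \<alpha> (reg_fit K x \<alpha>) \<le> (\<gamma> - \<alpha>) * ((N \<alpha>)^2 - (N \<gamma>)^2)"
    proof -
      have "Jf x \<gamma> (reg_fit K x \<gamma>) \<le> Jf x \<gamma> (reg_fit K x \<alpha>)"
        using reg_fit_min[OF x g] reg_fit_min(1)[OF x a] by simp
      then have "L \<gamma> + \<gamma> * (N \<gamma>)^2 \<le> L \<alpha> + \<gamma> * (N \<alpha>)^2" by (simp add: JN)
      then show ?thesis unfolding JN by (simp add: algebra_simps)
    qed
    also have "(\<gamma> - \<alpha>) * ((N \<alpha>)^2 - (N \<gamma>)^2) \<le> \<bar>\<gamma> - \<alpha>\<bar> * ((N \<alpha>)^2 + C0 / \<gamma>)"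
    proof -
      have "(\<gamma> - \<alpha>) * ((N \<alpha>)^2 - (N \<gamma>)^2) \<le> \<bar>(\<gamma> - \<alpha>) * ((N \<alpha>)^2 - (N \<gamma>)^2)\<bar>" by simp
      also have "\<dots> = \<bar>\<gamma> - \<alpha>\<bar> * \<bar>(N \<alpha>)^2 - (N \<gamma>)^2\<bar>" by (simp add: abs_mult)
      also have "\<bar>(N \<alpha>)^2 - (N \<gamma>)^2\<bar> \<le> (N \<alpha>)^2 + C0 / \<gamma>"
      proof -
        have c0: "0 \<le> C0 / \<gamma>" using L2_nonneg[of x "cf []"] g unfolding C0_def by simp
        show ?thesis unfolding abs_le_iff
          using bnd[OF g] c0 zero_le_power2[of "N \<alpha>"] zero_le_power2[of "N \<gamma>"] by (intro conjI; linarith)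
      qed
      then have "\<bar>\<gamma> - \<alpha>\<bar> * \<bar>(N \<alpha>)^2 - (N \<gamma>)^2\<bar> \<le> \<bar>\<gamma> - \<alpha>\<bar> * ((N \<alpha>)^2 + C0 / \<gamma>)"
        by (rule mult_left_mono) simp
      finally show ?thesis .
    qed
    finally have "Jf x \<alpha> (reg_fit K x \<gamma>) - Jf x \<alpha> (reg_fit K x \<alpha>) \<le> \<bar>\<gamma> - \<alpha>\<bar> * ((N \<alpha>)^2 + C0 / \<gamma>)" .
    then have "2 / \<alpha> * (Jf x \<alpha> (reg_fit K x \<gamma>) - Jf x \<alpha> (reg_fit K x \<alpha>)) \<le> 2 / \<alpha> * (\<bar>\<gamma> - \<alpha>\<bar> * ((N \<alpha>)^2 + C0 / \<gamma>))"
      by (rule mult_left_mono) (use a in simp)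
    with ch1 show ?thesis by linarith
  qed
  define w where "w j = 2 / \<alpha> * (\<bar>\<alpha>s j - \<alpha>\<bar> * ((N \<alpha>)^2 + C0 / \<alpha>s j))" for j
  have wl: "w \<longlonglongrightarrow> 2 / \<alpha> * (\<bar>\<alpha> - \<alpha>\<bar> * ((N \<alpha>)^2 + C0 / \<alpha>))"
    unfolding w_def using a by (intro tendsto_intros lim) auto
  then have wl0: "w \<longlonglongrightarrow> 0" by simp
  have "(\<lambda>j. N (\<alpha>s j) - N \<alpha>) \<longlonglongrightarrow> 0"
  proof (rule Lim_null_comparison)
    show "\<forall>\<^sub>F j in sequentially. norm (N (\<alpha>s j) - N \<alpha>) \<le> sqrt (w j)"
    proof (intro always_eventually allI)
      fix j
      have "sqrt ((N \<alpha> - N (\<alpha>s j))^2) \<le> sqrt (w j)"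
        unfolding w_def by (rule real_sqrt_le_mono[OF est[OF pos]])
      then show "norm (N (\<alpha>s j) - N \<alpha>) \<le> sqrt (w j)" by simp
    qed
    show "(\<lambda>j. sqrt (w j)) \<longlonglongrightarrow> 0" using tendsto_real_sqrt[OF wl0] by simp
  qed
  then have "(\<lambda>j. (N (\<alpha>s j) - N \<alpha>) + N \<alpha>) \<longlonglongrightarrow> 0 + N \<alpha>" by (intro tendsto_add) auto
  then show ?thesis by (simp add: N_def)
qed

end



lemma psd_cov:
  fixes M :: "'w measure" and X :: "'w \<Rightarrow> real \<Rightarrow> real" and m :: "real \<Rightarrow> real"
  assumes P: "prob_space M"
    and meas: "\<And>t. t \<in> {0..1} \<Longrightarrow> (\<lambda>\<omega>. X \<omega> t) \<in> borel_measurable M"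
    and so: "\<And>t. t \<in> {0..1} \<Longrightarrow> integrable M (\<lambda>\<omega>. (X \<omega> t)\<^sup>2)"
    and Kd: "K = (\<lambda>s t. \<integral>\<omega>. (X \<omega> s - m s) * (X \<omega> t - m t) \<partial>M)"
    and v: "valid_combo c"
  shows "kinner K c c \<ge> 0"
proof -
  interpret prob_space M by (rule P)
  define Y where "Y s \<omega> = X \<omega> s - m s" for s \<omega>
  define S where "S c \<omega> = (\<Sum>(a, s)\<leftarrow>c. a * Y s \<omega>)" for c \<omega>
  have Ym: "Y s \<in> borel_measurable M" if "s \<in> {0..1}" for s
    unfolding Y_def by (intro borel_measurable_diff meas that borel_measurable_const)
  have Xi: "integrable M (\<lambda>\<omega>. X \<omega> s)" if "s \<in> {0..1}" for s
    using square_integrable_imp_integrable[OF meas[OF that] so[OF that]] .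
  have Y2: "integrable M (\<lambda>\<omega>. (Y s \<omega>)^2)" if s: "s \<in> {0..1}" for s
  proof -
    have "integrable M (\<lambda>\<omega>. (X \<omega> s)^2 - 2 * m s * X \<omega> s + (m s)^2)"
      using so[OF s] Xi[OF s] by (intro Bochner_Integration.integrable_add Bochner_Integration.integrable_diff Bochner_Integration.integrable_mult_right integrable_const)
    then show ?thesis unfolding Y_def by (simp add: power2_eq_square algebra_simps)
  qed
  have YY: "integrable M (\<lambda>\<omega>. Y s \<omega> * Y r \<omega>)" if s: "s \<in> {0..1}" and r: "r \<in> {0..1}" for s r
  proof (rule Bochner_Integration.integrable_bound)
    show "integrable M (\<lambda>\<omega>. (Y s \<omega>)^2 + (Y r \<omega>)^2)" using Y2[OF s] Y2[OF r] by (rule Bochner_Integration.integrable_add)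
    show "(\<lambda>\<omega>. Y s \<omega> * Y r \<omega>) \<in> borel_measurable M" using Ym[OF s] Ym[OF r] by (rule borel_measurable_times)
    show "AE \<omega> in M. norm (Y s \<omega> * Y r \<omega>) \<le> norm ((Y s \<omega>)^2 + (Y r \<omega>)^2)"
    proof (rule AE_I2)
      fix \<omega>
      have "0 \<le> (\<bar>Y s \<omega>\<bar> - \<bar>Y r \<omega>\<bar>)^2" by simp
      then have "2 * \<bar>Y s \<omega>\<bar> * \<bar>Y r \<omega>\<bar> \<le> (Y s \<omega>)^2 + (Y r \<omega>)^2"
        by (simp add: power2_eq_square algebra_simps)
      moreover have "0 \<le> \<bar>Y s \<omega>\<bar> * \<bar>Y r \<omega>\<bar>" by simp
      ultimately have "\<bar>Y s \<omega>\<bar> * \<bar>Y r \<omega>\<bar> \<le> (Y s \<omega>)^2 + (Y r \<omega>)^2" by linarith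
      then show "norm (Y s \<omega> * Y r \<omega>) \<le> norm ((Y s \<omega>)^2 + (Y r \<omega>)^2)"
        by (simp add: abs_mult)
    qed
  qed
  have KY: "K s r = (\<integral>\<omega>. Y s \<omega> * Y r \<omega> \<partial>M)" for s r
    by (simp add: Kd Y_def)
  have L1: "integrable M (\<lambda>\<omega>. Y s \<omega> * S d \<omega>) \<and> (\<Sum>(b, r)\<leftarrow>d. a * b * K s r) = a * (\<integral>\<omega>. Y s \<omega> * S d \<omega> \<partial>M)"
    if s: "s \<in> {0..1}" and vd: "valid_combo d" for s d a
    using vd
  proof (induct d)
    case Nil then show ?case by (simp add: S_def)
  next
    case (Cons p d)
    obtain b r where p: "p = (b, r)" by (cases p)
    have r: "r \<in> {0..1}" using Cons.prems p by (simp add: valid_combo_def)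
    have vd': "valid_combo d" using Cons.prems by (simp add: valid_combo_def)
    have IH: "integrable M (\<lambda>\<omega>. Y s \<omega> * S d \<omega>)" "(\<Sum>(b, r)\<leftarrow>d. a * b * K s r) = a * (\<integral>\<omega>. Y s \<omega> * S d \<omega> \<partial>M)"
      using Cons.hyps[OF vd'] by auto
    have eq: "(\<lambda>\<omega>. Y s \<omega> * S (p # d) \<omega>) = (\<lambda>\<omega>. b * (Y s \<omega> * Y r \<omega>) + Y s \<omega> * S d \<omega>)"
      by (simp add: S_def p algebra_simps)
    have i1: "integrable M (\<lambda>\<omega>. b * (Y s \<omega> * Y r \<omega>))" using YY[OF s r] by (rule Bochner_Integration.integrable_mult_right)
    show ?case
    proof
      show "integrable M (\<lambda>\<omega>. Y s \<omega> * S (p # d) \<omega>)" unfolding eq using i1 IH(1) by (rule Bochner_Integration.integrable_add)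
      have "(\<integral>\<omega>. Y s \<omega> * S (p # d) \<omega> \<partial>M) = b * K s r + (\<integral>\<omega>. Y s \<omega> * S d \<omega> \<partial>M)"
        unfolding eq using i1 IH(1) by (simp add: KY)
      then show "(\<Sum>(b, r)\<leftarrow>p # d. a * b * K s r) = a * (\<integral>\<omega>. Y s \<omega> * S (p # d) \<omega> \<partial>M)"
        using IH(2) by (simp add: p algebra_simps)
    qed
  qed
  have L2: "integrable M (\<lambda>\<omega>. S c \<omega> * S d \<omega>) \<and> kinner K c d = (\<integral>\<omega>. S c \<omega> * S d \<omega> \<partial>M)"
    if vc: "valid_combo c" and vd: "valid_combo d" for c d
    using vc
  proof (induct c)
    case Nil then show ?case by (simp add: S_def)
  next
    case (Cons p c)
    obtain a s where p: "p = (a, s)" by (cases p)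
    have s: "s \<in> {0..1}" using Cons.prems p by (simp add: valid_combo_def)
    have vc': "valid_combo c" using Cons.prems by (simp add: valid_combo_def)
    have IH: "integrable M (\<lambda>\<omega>. S c \<omega> * S d \<omega>)" "kinner K c d = (\<integral>\<omega>. S c \<omega> * S d \<omega> \<partial>M)"
      using Cons.hyps[OF vc'] by auto
    have eq: "(\<lambda>\<omega>. S (p # c) \<omega> * S d \<omega>) = (\<lambda>\<omega>. a * (Y s \<omega> * S d \<omega>) + S c \<omega> * S d \<omega>)"
      by (simp add: S_def p algebra_simps)
    have i1: "integrable M (\<lambda>\<omega>. a * (Y s \<omega> * S d \<omega>))" using L1[OF s vd] by (intro Bochner_Integration.integrable_mult_right) auto
    show ?case
    proof
      show "integrable M (\<lambda>\<omega>. S (p # c) \<omega> * S d \<omega>)" unfolding eq using i1 IH(1) by (rule Bochner_Integration.integrable_add)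
      have "(\<integral>\<omega>. S (p # c) \<omega> * S d \<omega> \<partial>M) = a * (\<integral>\<omega>. Y s \<omega> * S d \<omega> \<partial>M) + (\<integral>\<omega>. S c \<omega> * S d \<omega> \<partial>M)"
        unfolding eq using i1 IH(1) by simp
      then show "kinner K (p # c) d = (\<integral>\<omega>. S (p # c) \<omega> * S d \<omega> \<partial>M)"
        using IH(2) L1[OF s vd, of a] by (simp add: p)
    qed
  qed
  have "kinner K c c = (\<integral>\<omega>. S c \<omega> * S c \<omega> \<partial>M)" using L2[OF v v] by simp
  also have "\<dots> \<ge> 0" by (rule integral_nonneg_AE) simp
  finally show ?thesis .
qed


theorem proposition3:
  fixes M :: "'w measure" and X :: "'w \<Rightarrow> real \<Rightarrow> real"
    and m :: "real \<Rightarrow> real" and K :: "real \<Rightarrow> real \<Rightarrow> real"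
    and \<alpha>s :: "nat \<Rightarrow> real" and \<alpha> :: real
  assumes "prob_space M"
    and meas: "\<And>t. t \<in> {0..1} \<Longrightarrow> (\<lambda>\<omega>. X \<omega> t) \<in> borel_measurable M"
    and second_order: "\<And>t. t \<in> {0..1} \<Longrightarrow> integrable M (\<lambda>\<omega>. (X \<omega> t)\<^sup>2)"
    and traj_cont: "\<And>\<omega>. \<omega> \<in> space M \<Longrightarrow> continuous_on {0..1} (X \<omega>)"
    and mean_def: "m = (\<lambda>t. \<integral>\<omega>. X \<omega> t \<partial>M)"
    and cov_def: "K = (\<lambda>s t. \<integral>\<omega>. (X \<omega> s - m s) * (X \<omega> t - m t) \<partial>M)"
    and mean_cont: "continuous_on {0..1} m"
    and cov_cont: "continuous_on ({0..1} \<times> {0..1}) (\<lambda>(s, t). K s t)"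
    and pd: "pos_def_kernel K"
    and pos: "\<And>j. \<alpha>s j > 0"
    and lim: "\<alpha>s \<longlonglongrightarrow> \<alpha>" and "\<alpha> > 0"
  shows "AE \<omega> in M. (\<lambda>j. rkhs_norm K (reg_fit K (X \<omega>) (\<alpha>s j)))
                       \<longlonglongrightarrow> rkhs_norm K (reg_fit K (X \<omega>) \<alpha>)"
proof -
  have symK: "\<And>s t. K s t = K t s" using cov_def by (simp add: mult.commute)
  have psdK: "\<And>c. valid_combo c \<Longrightarrow> kinner K c c \<ge> 0"
    by (rule psd_cov[OF assms(1) meas second_order cov_def])
  interpret kern K using symK psdK cov_cont by unfold_locales auto
  show ?thesis
  proof (rule AE_I2)
    fix \<omega> assume w: "\<omega> \<in> space M"
    show "(\<lambda>j. rkhs_norm K (reg_fit K (X \<omega>) (\<alpha>s j))) \<longlonglongrightarrow> rkhs_norm K (reg_fit K (X \<omega>) \<alpha>)"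
      by (rule norm_cont[OF traj_cont[OF w] pos lim \<open>\<alpha> > 0\<close>])
  qed
qed

end
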